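(* Let $G=(N,E)$ and $G'=(N,E')$ be DAGs with $\mathcal{P}^{G'}\supseteq\mathcal{P}^G$ and $G'\supseteq G^*$. Then $G'^\sim\supseteq G^{\mathrm{M}}$.
   Context: DAG: finite directed graph without directed cycles; $\mathrm{pa}_G(s)$ = parents of $s$. $G^*=(N,E^* )$ with $E^*=\{(t,s):(s,t)\in E\}$; $G'\supseteq G^*$ means $E'\supseteq E^*$. The undirected version is $G^\sim=(N,E\cup E^* )$. The moral graph is $G^{\mathrm{M}}=(N,E\cup E^*\cup\{(t_1,t_2):\exists s,\ t_1,t_2\in\mathrm{pa}_G(s),\ t_1\ne t_2\})$. Each node $s$ has a state space $\mathsf{X}_s$ (finite set with counting measure, or finite-dimensional real vector space with Lebesgue measure $\mu_s$), $\mu=\otimes_s\mu_s$; $\mathcal{P}^G$ is the set of probability distributions on $\times_s\mathsf{X}_s$ with $\mu$-density $p(x)=\prod_{s}k^s(x_s\mid x_{\mathrm{pa}_G(s)})$ for some nonnegative measurable $k^s$ with $\int k^s(x_s\mid x_{\mathrm{pa}_G(s)})\,d\mu_s(x_s)=1$. *)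

theory Defs
  imports "HOL-Probability.Probability"
begin

text \<open>All state spaces live in the common
  carrier type nat => real: a finite state space is a finite set with counting
  measure; R^d is the product of d copies of lborel on coordinates 0..d-1.\<close>

definition pa :: "('n \<times> 'n) set \<Rightarrow> 'n \<Rightarrow> 'n set" where
  "pa E s = {t. (t, s) \<in> E}"

definition undirected :: "('n \<times> 'n) set \<Rightarrow> ('n \<times> 'n) set" where
  "undirected E = E \<union> E\<inverse>"

definition moral :: "('n \<times> 'n) set \<Rightarrow> ('n \<times> 'n) set" where
  "moral E = E \<union> E\<inverse> \<union> {(t1, t2). \<exists>s. t1 \<in> pa E s \<and> t2 \<in> pa E s \<and> t1 \<noteq> t2}"

definition state_spaces :: "('n \<Rightarrow> (nat \<Rightarrow> real) measure) \<Rightarrow> bool" where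
  "state_spaces M \<longleftrightarrow> (\<forall>s.
     (\<exists>A. finite A \<and> card A \<ge> 2 \<and> M s = count_space A) \<or>
     (\<exists>d. d \<ge> 1 \<and> M s = PiM {..<d} (\<lambda>_. lborel)))"

definition dag_model ::
  "('n::finite \<Rightarrow> (nat \<Rightarrow> real) measure) \<Rightarrow> ('n \<times> 'n) set \<Rightarrow> ('n \<Rightarrow> (nat \<Rightarrow> real)) measure set" where
  "dag_model M E = {P. prob_space P \<and>
     (\<exists>k :: 'n \<Rightarrow> ('n \<Rightarrow> (nat \<Rightarrow> real)) \<Rightarrow> (nat \<Rightarrow> real) \<Rightarrow> real.
        (\<forall>s. (\<lambda>(y, z). k s y z) \<in> borel_measurable (PiM (pa E s) M \<Otimes>\<^sub>M M s)
           \<and> (\<forall>y \<in> space (PiM (pa E s) M). \<forall>z \<in> space (M s). 0 \<le> k s y z)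
           \<and> (\<forall>y \<in> space (PiM (pa E s) M). (\<integral>\<^sup>+ z. ennreal (k s y z) \<partial>M s) = 1))
      \<and> P = density (PiM UNIV M)
              (\<lambda>x. \<Prod>s\<in>UNIV. ennreal (k s (restrict x (pa E s)) (x s))))}"

end

theory Submission
  imports Defs
begin

definition kcond :: "('n \<Rightarrow> 'a measure) \<Rightarrow> ('n \<times> 'n) set \<Rightarrow> ('n \<Rightarrow> ('n \<Rightarrow> 'a) \<Rightarrow> 'a \<Rightarrow> real) \<Rightarrow> bool" where
  "kcond M E k \<longleftrightarrow> (\<forall>s. (\<lambda>(y, z). k s y z) \<in> borel_measurable (PiM (pa E s) M \<Otimes>\<^sub>M M s)
           \<and> (\<forall>y \<in> space (PiM (pa E s) M). \<forall>z \<in> space (M s). 0 \<le> k s y z)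
           \<and> (\<forall>y \<in> space (PiM (pa E s) M). (\<integral>\<^sup>+ z. ennreal (k s y z) \<partial>M s) = 1))"

definition KK :: "('n \<times> 'n) set \<Rightarrow> ('n \<Rightarrow> ('n \<Rightarrow> 'a) \<Rightarrow> 'a \<Rightarrow> real) \<Rightarrow> 'n \<Rightarrow> ('n \<Rightarrow> 'a) \<Rightarrow> ennreal" where
  "KK E k v m = ennreal (k v (restrict m (pa E v)) (m v))"

definition ov :: "'n set \<Rightarrow> ('n \<Rightarrow> 'a) \<Rightarrow> ('n \<Rightarrow> 'a) \<Rightarrow> 'n \<Rightarrow> 'a" where
  "ov D x y = (\<lambda>i. if i \<in> D then y i else x i)"

lemma KK_meas:
  assumes "kcond M E k" "pa E v \<subseteq> I" "v \<in> I"
  shows "KK E k v \<in> borel_measurable (PiM I M)"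
proof -
  have m1: "(\<lambda>(y, z). k v y z) \<in> borel_measurable (PiM (pa E v) M \<Otimes>\<^sub>M M v)"
    using assms(1) unfolding kcond_def by blast
  have m2: "(\<lambda>m. (restrict m (pa E v), m v)) \<in> measurable (PiM I M) (PiM (pa E v) M \<Otimes>\<^sub>M M v)"
    using assms(2,3) by (intro measurable_Pair measurable_restrict_subset measurable_component_singleton)
  have "(\<lambda>m. (\<lambda>(y, z). k v y z) (restrict m (pa E v), m v)) \<in> borel_measurable (PiM I M)"
    using measurable_comp[OF m2 m1] by (simp add: comp_def)
  then show ?thesis unfolding KK_def by simp
qed

lemma KK_upd:
  assumes "v \<noteq> w" "w \<notin> pa E v"
  shows "KK E k v (m(w := z)) = KK E k v m"
  using assms unfolding KK_def by simp

lemma KK_norm: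
  assumes "kcond M E k" "w \<notin> pa E w" "m \<in> space (PiM I M)" "pa E w \<subseteq> I"
  shows "(\<integral>\<^sup>+ z. KK E k w (m(w := z)) \<partial>M w) = 1"
proof -
  have r: "restrict m (pa E w) \<in> space (PiM (pa E w) M)"
    using measurable_space[OF measurable_restrict_subset[OF assms(4)] assms(3)] .
  have "(\<integral>\<^sup>+ z. KK E k w (m(w := z)) \<partial>M w) = (\<integral>\<^sup>+ z. ennreal (k w (restrict m (pa E w)) z) \<partial>M w)"
    using assms(2) unfolding KK_def by simp
  also have "\<dots> = 1" using assms(1) r unfolding kcond_def by blast
  finally show ?thesis .
qed

lemma ov_meas:
  assumes "x \<in> space (PiM UNIV M)"
  shows "ov D x \<in> measurable (PiM D M) (PiM UNIV M)"
proof -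
  have "(\<lambda>y. \<lambda>i\<in>UNIV. (if i \<in> D then y i else x i)) \<in> measurable (PiM D M) (PiM UNIV M)"
  proof (rule measurable_restrict)
    fix i :: 'a
    show "(\<lambda>y. if i \<in> D then y i else x i) \<in> measurable (PiM D M) (M i)"
      using assms by (cases "i \<in> D") (auto intro!: measurable_const simp: space_PiM PiE_iff)
  qed
  then show ?thesis unfolding ov_def restrict_def by simp
qed

lemma ov_space:
  assumes "x \<in> space (PiM UNIV M)" "y \<in> space (PiM D M)"
  shows "ov D x y \<in> space (PiM UNIV M)"
  using measurable_space[OF ov_meas[OF assms(1)] assms(2)] .

lemma sink_lemma:
  fixes E :: "('n::finite \<times> 'n) set"
  assumes sf: "\<And>v. sigma_finite_measure (M v)"
    and kc: "kcond M E k" and ac: "acyclic E"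
  shows "x \<in> space (PiM UNIV M) \<Longrightarrow> (\<integral>\<^sup>+ y. (\<Prod>v\<in>D. KK E k v (ov D x y)) \<partial>PiM D M) = 1"
proof (induction "card D" arbitrary: D x rule: less_induct)
  case less
  interpret product_sigma_finite M by (simp add: product_sigma_finite_def sf)
  show ?case
  proof (cases "D = {}")
    case True
    then show ?thesis by (simp add: nn_integral_const space_PiM_empty)
  next
    case False
    have finE: "finite E" by (rule finite_subset[of _ UNIV]) auto
    have wf: "wf (E\<inverse>)" using finite_acyclic_wf_converse[OF finE ac] .
    obtain w where wD: "w \<in> D" and wmin: "\<And>u. (u, w) \<in> E\<inverse> \<Longrightarrow> u \<notin> D"
      using wfE_min[OF wf, of _ D] False by blast
    have noch: "\<And>u. u \<in> D \<Longrightarrow> (w, u) \<notin> E" using wmin by blast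
    define D' where "D' = D - {w}"
    have DD: "D = insert w D'" and wD': "w \<notin> D'" using wD by (auto simp: D'_def)
    have cardD': "card D' < card D" using wD card_gt_0_iff[of D] by (auto simp: D'_def)
    have nself: "\<And>v. v \<notin> pa E v" using ac unfolding pa_def acyclic_def
      by (auto dest: r_into_trancl')
    have x: "x \<in> space (PiM UNIV M)" by fact
    let ?f = "\<lambda>y. (\<Prod>v\<in>D. KK E k v (ov D x y))"
    have fm: "?f \<in> borel_measurable (PiM (insert w D') M)"
      unfolding DD[symmetric]
      by (intro borel_measurable_prod_ennreal measurable_compose[OF ov_meas[OF x]] KK_meas[OF kc]) auto
    have "(\<integral>\<^sup>+ y. ?f y \<partial>PiM D M) = (\<integral>\<^sup>+ y. (\<integral>\<^sup>+ z. ?f (y(w := z)) \<partial>M w) \<partial>PiM D' M)"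
      using product_nn_integral_insert[OF finite[of D'] wD' fm] by (simp only: DD[symmetric])
    also have "\<dots> = (\<integral>\<^sup>+ y. (\<Prod>v\<in>D'. KK E k v (ov D' x y)) \<partial>PiM D' M)"
    proof (rule nn_integral_cong)
      fix y assume y: "y \<in> space (PiM D' M)"
      have om: "ov D' x y \<in> space (PiM UNIV M)" by (rule ov_space[OF x y])
      have eq: "ov D x (y(w := z)) = (ov D' x y)(w := z)" for z
        unfolding ov_def DD by (auto simp: fun_eq_iff)
      have fz: "?f (y(w := z)) = KK E k w ((ov D' x y)(w := z)) * (\<Prod>v\<in>D'. KK E k v (ov D' x y))" for z
      proof -
        have "?f (y(w := z)) = KK E k w ((ov D' x y)(w := z)) * (\<Prod>v\<in>D'. KK E k v ((ov D' x y)(w := z)))"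
          by (subst eq) (simp add: DD wD')
        also have "(\<Prod>v\<in>D'. KK E k v ((ov D' x y)(w := z))) = (\<Prod>v\<in>D'. KK E k v (ov D' x y))"
        proof (rule prod.cong[OF refl])
          fix v assume v: "v \<in> D'"
          have "v \<noteq> w" using v wD' by auto
          moreover have "w \<notin> pa E v" using noch[of v] v DD by (auto simp: pa_def)
          ultimately show "KK E k v ((ov D' x y)(w := z)) = KK E k v (ov D' x y)" by (rule KK_upd)
        qed
        finally show ?thesis .
      qed
      then have "(\<integral>\<^sup>+ z. ?f (y(w := z)) \<partial>M w) = (\<integral>\<^sup>+ z. KK E k w ((ov D' x y)(w := z)) \<partial>M w) * (\<Prod>v\<in>D'. KK E k v (ov D' x y))"
      proof -
        have mz: "(\<lambda>z. KK E k w ((ov D' x y)(w := z))) \<in> borel_measurable (M w)"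
        proof -
          have "(\<lambda>z. (ov D' x y)(w := z)) \<in> measurable (M w) (PiM UNIV M)"
            using measurable_fun_upd[of UNIV UNIV w "\<lambda>_. ov D' x y" "M w" M "\<lambda>z. z"] om
            by (auto intro!: measurable_const)
          then show ?thesis by (rule measurable_compose) (rule KK_meas[OF kc], auto)
        qed
        show ?thesis using fz nn_integral_multc[OF mz] by simp
      qed
      also have "\<dots> = (\<Prod>v\<in>D'. KK E k v (ov D' x y))"
        using KK_norm[OF kc nself om, of w] by simp
      finally show "(\<integral>\<^sup>+ z. ?f (y(w := z)) \<partial>M w) = (\<Prod>v\<in>D'. KK E k v (ov D' x y))" .
    qed
    also have "\<dots> = 1" using less(1)[OF cardD' x] .
    finally show ?thesis .
  qed
qed

lemma lborel_box_space:
  fixes d :: nat assumes d: "d \<ge> 1"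
  shows "sigma_finite_measure (PiM {..<d} (\<lambda>_. lborel :: real measure)) \<and>
    (\<exists>B0 B1. B0 \<in> sets (PiM {..<d} (\<lambda>_. lborel :: real measure)) \<and> B1 \<in> sets (PiM {..<d} (\<lambda>_. lborel :: real measure))
       \<and> B0 \<inter> B1 = {} \<and> emeasure (PiM {..<d} (\<lambda>_. lborel :: real measure)) B0 = 1
       \<and> emeasure (PiM {..<d} (\<lambda>_. lborel :: real measure)) B1 = 1)"
proof -
  interpret F: finite_product_sigma_finite "\<lambda>_. lborel :: real measure" "{..<d}"
    by unfold_locales (auto intro: lborel.sigma_finite_measure_axioms)
  define B0 where "B0 = PiE {..<d} (\<lambda>_::nat. {0..1::real})"
  define B1 where "B1 = PiE {..<d} (\<lambda>i::nat. if i = 0 then {2..3::real} else {0..1})"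
  have "B0 \<in> sets (PiM {..<d} (\<lambda>_. lborel :: real measure))" unfolding B0_def by (intro sets_PiM_I_finite) auto
  moreover have "B1 \<in> sets (PiM {..<d} (\<lambda>_. lborel :: real measure))" unfolding B1_def by (intro sets_PiM_I_finite) auto
  moreover have "B0 \<inter> B1 = {}"
  proof -
    have "0 \<in> {..<d}" using d by auto
    show ?thesis
    proof (rule equals0I)
      fix x assume x: "x \<in> B0 \<inter> B1"
      have "x 0 \<in> {0..1}" using x \<open>0 \<in> {..<d}\<close> unfolding B0_def by (auto simp: PiE_iff)
      moreover have "x 0 \<in> {2..3}"
      proof -
        from x have "\<forall>i\<in>{..<d}. x i \<in> (if i = 0 then {2..3} else {0..1})" unfolding B1_def PiE_iff by blast
        then have "x 0 \<in> (if (0::nat) = 0 then {2..3} else {0..1})" using \<open>0 \<in> {..<d}\<close> by blast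
        then show ?thesis by simp
      qed
      ultimately show False by auto
    qed
  qed
  moreover have "emeasure (PiM {..<d} (\<lambda>_. lborel :: real measure)) B0 = 1"
    unfolding B0_def by (subst F.measure_times) auto
  moreover have "emeasure (PiM {..<d} (\<lambda>_. lborel :: real measure)) B1 = 1"
    unfolding B1_def by (subst F.measure_times) (auto intro!: prod.neutral)
  ultimately show ?thesis using F.sigma_finite_measure_axioms by blast
qed

lemma state_space_props:
  assumes "state_spaces M"
  shows "sigma_finite_measure (M v) \<and>
    (\<exists>B0 B1. B0 \<in> sets (M v) \<and> B1 \<in> sets (M v) \<and> B0 \<inter> B1 = {} \<and> emeasure (M v) B0 = 1 \<and> emeasure (M v) B1 = 1)"
proof -
  from assms[unfolded state_spaces_def, rule_format, of v]
  show ?thesis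
  proof (elim disjE exE conjE)
    fix A assume A: "finite A" "2 \<le> card A" "M v = count_space A"
    have "A \<noteq> {}" using A(2) by auto
    then obtain a where a: "a \<in> A" by blast
    have "card (A - {a}) \<ge> 1" using A a by (simp add: card_Diff_singleton)
    then have "A - {a} \<noteq> {}" by (metis card.empty not_one_le_zero)
    then obtain b where "b \<in> A - {a}" by blast
    then have ab: "a \<in> A" "b \<in> A" "a \<noteq> b" using a by auto
    have "sigma_finite_measure (count_space A)"
      using A(1) by (intro sigma_finite_measure_count_space_countable) (simp add: countable_finite)
    moreover have "{a} \<in> sets (count_space A) \<and> {b} \<in> sets (count_space A) \<and> {a} \<inter> {b} = {}
      \<and> emeasure (count_space A) {a} = 1 \<and> emeasure (count_space A) {b} = 1"
      using ab by (simp add: emeasure_count_space_finite)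
    ultimately show ?thesis using A(3) by metis
  next
    fix d :: nat assume "1 \<le> d" "M v = PiM {..<d} (\<lambda>_. lborel)"
    then show ?thesis using lborel_box_space by metis
  qed
qed

lemma KK_agree:
  assumes "\<And>i. i \<in> insert v (pa E v) \<Longrightarrow> m i = m' i"
  shows "KK E k v m = KK E k v m'"
proof -
  have "restrict m (pa E v) = restrict m' (pa E v)" using assms by (auto simp: restrict_def)
  moreover have "m v = m' v" using assms by auto
  ultimately show ?thesis unfolding KK_def by simp
qed

lemma split_lemma:
  fixes E :: "('n::finite \<times> 'n) set"
  assumes sf: "\<And>v. sigma_finite_measure (M v)"
    and kc: "kcond M E k" and ac: "acyclic E"
    and anc: "\<And>v. v \<in> A \<Longrightarrow> pa E v \<subseteq> A"
    and g: "g \<in> borel_measurable (PiM A M)"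
    and ne: "space (PiM UNIV M) \<noteq> {}"
  shows "(\<integral>\<^sup>+ x. (\<Prod>v\<in>UNIV. KK E k v x) * g (restrict x A) \<partial>PiM UNIV M)
       = (\<integral>\<^sup>+ u. (\<Prod>v\<in>A. KK E k v u) * g u \<partial>PiM A M)"
proof -
  interpret product_sigma_finite M by (simp add: product_sigma_finite_def sf)
  have AU: "A \<union> - A = UNIV" by auto
  have dis: "A \<inter> - A = {}" by auto
  obtain x0 where x0: "x0 \<in> space (PiM UNIV M)" using ne by blast
  have y0: "restrict x0 (- A) \<in> space (PiM (- A) M)"
    using measurable_space[OF measurable_restrict_subset x0] by auto
  let ?h = "\<lambda>x. (\<Prod>v\<in>UNIV. KK E k v x) * g (restrict x A)"
  have hm: "?h \<in> borel_measurable (PiM (A \<union> - A) M)"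
    unfolding AU
    by (intro borel_measurable_times_ennreal borel_measurable_prod_ennreal KK_meas[OF kc]
          measurable_compose[OF measurable_restrict_subset g]) auto
  have "(\<integral>\<^sup>+ x. ?h x \<partial>PiM UNIV M) = (\<integral>\<^sup>+ u. (\<integral>\<^sup>+ y. ?h (merge A (- A) (u, y)) \<partial>PiM (- A) M) \<partial>PiM A M)"
    using product_nn_integral_fold[OF dis finite finite hm] by (simp only: AU)
  also have "\<dots> = (\<integral>\<^sup>+ u. (\<Prod>v\<in>A. KK E k v u) * g u \<partial>PiM A M)"
  proof (rule nn_integral_cong)
    fix u assume u: "u \<in> space (PiM A M)"
    define x where "x = merge A (- A) (u, restrict x0 (- A))"
    have x: "x \<in> space (PiM UNIV M)"
      using measurable_space[OF measurable_merge, of "(u, restrict x0 (- A))" A M "- A"] u y0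
      unfolding x_def by (simp add: space_pair_measure AU)
    have mo: "merge A (- A) (u, y) = ov (- A) x y" for y
      unfolding x_def ov_def merge_def by (auto simp: fun_eq_iff)
    have ru: "restrict (merge A (- A) (u, y)) A = u" for y
      using u by (simp add: space_PiM PiE_def extensional_restrict)
    have kA: "KK E k v (merge A (- A) (u, y)) = KK E k v u" if "v \<in> A" for v y
      by (rule KK_agree) (use that anc in \<open>auto simp: merge_def\<close>)
    have eq: "?h (merge A (- A) (u, y)) = ((\<Prod>v\<in>A. KK E k v u) * g u) * (\<Prod>v\<in>- A. KK E k v (ov (- A) x y))" for y
    proof -
      have "(\<Prod>v\<in>UNIV. KK E k v (merge A (- A) (u, y))) =
          (\<Prod>v\<in>A. KK E k v (merge A (- A) (u, y))) * (\<Prod>v\<in>- A. KK E k v (merge A (- A) (u, y)))"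
        using prod.union_disjoint[OF finite finite dis, of "\<lambda>v. KK E k v (merge A (- A) (u, y))"]
        by (simp only: AU)
      then show ?thesis using kA by (simp only: ru) (simp add: mo mult_ac)
    qed
    have "(\<integral>\<^sup>+ y. ?h (merge A (- A) (u, y)) \<partial>PiM (- A) M)
        = ((\<Prod>v\<in>A. KK E k v u) * g u) * (\<integral>\<^sup>+ y. (\<Prod>v\<in>- A. KK E k v (ov (- A) x y)) \<partial>PiM (- A) M)"
      unfolding eq
      by (rule nn_integral_cmult)
        (intro borel_measurable_prod_ennreal measurable_compose[OF ov_meas[OF x]] KK_meas[OF kc], auto)
    also have "\<dots> = (\<Prod>v\<in>A. KK E k v u) * g u"
      using sink_lemma[OF sf kc ac x] by simp
    finally show "(\<integral>\<^sup>+ y. ?h (merge A (- A) (u, y)) \<partial>PiM (- A) M) = (\<Prod>v\<in>A. KK E k v u) * g u" .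
  qed
  finally show ?thesis .
qed

lemma pair_integral:
  assumes sf: "\<And>v. sigma_finite_measure (M v)" and t: "t1 \<noteq> t2"
    and f1: "f1 \<in> borel_measurable (M t1)" and f2: "f2 \<in> borel_measurable (M t2)"
  shows "(\<integral>\<^sup>+ p. f1 (p t1) * f2 (p t2) \<partial>PiM {t1, t2} M) = integral\<^sup>N (M t1) f1 * integral\<^sup>N (M t2) f2"
proof -
  interpret product_sigma_finite M by (simp add: product_sigma_finite_def sf)
  define f where "f i = (if i = t1 then f1 else f2)" for i
  have "(\<integral>\<^sup>+ p. (\<Prod>i\<in>{t1, t2}. f i (p i)) \<partial>PiM {t1, t2} M) = (\<Prod>i\<in>{t1, t2}. integral\<^sup>N (M i) (f i))"
    by (rule product_nn_integral_prod) (use f1 f2 t in \<open>auto simp: f_def\<close>)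
  then show ?thesis using t by (simp add: f_def)
qed

lemma final_contra:
  fixes N :: "'z measure" and \<Phi> \<Psi> :: "bool \<Rightarrow> 'z \<Rightarrow> ennreal"
  assumes W: "W \<in> sets N" "emeasure N W \<noteq> 0"
    and \<Phi>m: "\<And>a. \<Phi> a \<in> borel_measurable N" and \<Psi>m: "\<And>b. \<Psi> b \<in> borel_measurable N"
    and c: "c \<noteq> 0"
    and eq: "\<And>S a b. S \<in> sets N \<Longrightarrow>
      (\<integral>\<^sup>+ z. indicator (S \<inter> W) z * (\<Phi> a z * \<Psi> b z) \<partial>N) = (if a = b then c else 0) * emeasure N (S \<inter> W)"
  shows False
proof -
  define S0 where "S0 = {z \<in> space N. \<Phi> False z * \<Psi> False z = 0}"
  define S1 where "S1 = {z \<in> space N. \<Phi> True z * \<Psi> True z = 0}"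
  define N01 where "N01 = {z \<in> space N. \<Phi> False z * \<Psi> True z \<noteq> 0}"
  have [measurable]: "\<Phi> a \<in> borel_measurable N" "\<Psi> a \<in> borel_measurable N" for a using \<Phi>m \<Psi>m by auto
  have S0m: "S0 \<in> sets N" unfolding S0_def by measurable
  have S1m: "S1 \<in> sets N" unfolding S1_def by measurable
  have N01m: "N01 \<in> sets N" unfolding N01_def by measurable
  have z0: "emeasure N (S0 \<inter> W) = 0"
  proof -
    have "(\<integral>\<^sup>+ z. indicator (S0 \<inter> W) z * (\<Phi> False z * \<Psi> False z) \<partial>N) = 0"
      by (rule nn_integral_zero') (auto simp: S0_def indicator_def)
    then show ?thesis using eq[OF S0m, of False False] c by simp
  qed
  have z1: "emeasure N (S1 \<inter> W) = 0"
  proof -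
    have "(\<integral>\<^sup>+ z. indicator (S1 \<inter> W) z * (\<Phi> True z * \<Psi> True z) \<partial>N) = 0"
      by (rule nn_integral_zero') (auto simp: S1_def indicator_def)
    then show ?thesis using eq[OF S1m, of True True] c by simp
  qed
  have z2: "emeasure N (N01 \<inter> W) = 0"
  proof -
    have "(\<integral>\<^sup>+ z. indicator (N01 \<inter> W) z * (\<Phi> False z * \<Psi> True z) \<partial>N) = 0"
      using eq[OF N01m, of False True] by simp
    then have "AE z in N. indicator (N01 \<inter> W) z * (\<Phi> False z * \<Psi> True z) = 0"
      using W(1) N01m by (subst (asm) nn_integral_0_iff_AE) auto
    moreover have "{z \<in> space N. \<not> indicator (N01 \<inter> W) z * (\<Phi> False z * \<Psi> True z) = 0} = N01 \<inter> W"
      using sets.sets_into_space[OF W(1)] by (auto simp: N01_def indicator_def)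
    ultimately show ?thesis using AE_iff_measurable[of "N01 \<inter> W" N] W(1) N01m by auto
  qed
  have sub: "W \<subseteq> (S0 \<inter> W) \<union> ((S1 \<inter> W) \<union> (N01 \<inter> W))"
    using sets.sets_into_space[OF W(1)] by (auto simp: S0_def S1_def N01_def)
  have "emeasure N W \<le> emeasure N ((S0 \<inter> W) \<union> ((S1 \<inter> W) \<union> (N01 \<inter> W)))"
    by (rule emeasure_mono[OF sub]) (use W S0m S1m N01m in auto)
  also have "\<dots> \<le> emeasure N (S0 \<inter> W) + emeasure N ((S1 \<inter> W) \<union> (N01 \<inter> W))"
    by (rule emeasure_subadditive) (use W S0m S1m N01m in auto)
  also have "emeasure N ((S1 \<inter> W) \<union> (N01 \<inter> W)) \<le> emeasure N (S1 \<inter> W) + emeasure N (N01 \<inter> W)"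
    by (rule emeasure_subadditive) (use W S1m N01m in auto)
  finally have "emeasure N W \<le> 0" using z0 z1 z2 by (simp add: add_left_mono)
  then show False using W(2) by simp
qed

definition xr :: "bool \<Rightarrow> bool \<Rightarrow> bool" where "xr a b \<longleftrightarrow> a \<noteq> b"

lemma pred_xr[measurable (raw)]:
  assumes [measurable]: "Measurable.pred M P" "Measurable.pred M Q"
  shows "Measurable.pred M (\<lambda>x. xr (P x) (Q x))"
  unfolding xr_def by measurable

lemma main_contra:
  fixes E E' :: "('n::finite \<times> 'n) set"
    and M :: "'n \<Rightarrow> (nat \<Rightarrow> real) measure"
  assumes ss: "state_spaces M"
    and acE: "acyclic E" and acE': "acyclic E'"
    and sub: "dag_model M E \<subseteq> dag_model M E'"
    and conv: "E\<inverse> \<subseteq> E'"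
    and t1s: "t1 \<in> pa E s" and t2s: "t2 \<in> pa E s" and t12: "t1 \<noteq> t2"
    and n12: "(t1, t2) \<notin> E'" and n21: "(t2, t1) \<notin> E'"
  shows False
proof -
  have sf: "\<And>v. sigma_finite_measure (M v)" using state_space_props[OF ss] by blast
  interpret product_sigma_finite M by (simp add: product_sigma_finite_def sf)
  have "\<forall>v. \<exists>B. fst B \<in> sets (M v) \<and> snd B \<in> sets (M v) \<and> fst B \<inter> snd B = {} \<and> emeasure (M v) (fst B) = 1 \<and> emeasure (M v) (snd B) = 1"
    using state_space_props[OF ss] by fastforce
  then obtain BB where BB: "\<And>v. fst (BB v) \<in> sets (M v) \<and> snd (BB v) \<in> sets (M v) \<and> fst (BB v) \<inter> snd (BB v) = {} \<and> emeasure (M v) (fst (BB v)) = 1 \<and> emeasure (M v) (snd (BB v)) = 1"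
    by metis
  define B0 where "B0 v = fst (BB v)" for v
  define B1 where "B1 v = snd (BB v)" for v
  have B0s[measurable]: "B0 v \<in> sets (M v)" and B1s[measurable]: "B1 v \<in> sets (M v)"
    and Bdis: "B0 v \<inter> B1 v = {}" and B0m: "emeasure (M v) (B0 v) = 1" and B1m: "emeasure (M v) (B1 v) = 1" for v
    using BB[of v] by (auto simp: B0_def B1_def)
  have nselfE: "\<And>v. (v, v) \<notin> E" using acE unfolding acyclic_def by (auto dest: r_into_trancl')
  have st1: "s \<noteq> t1" and st2: "s \<noteq> t2" using t1s t2s nselfE by (auto simp: pa_def)
  define k :: "'n \<Rightarrow> ('n \<Rightarrow> nat \<Rightarrow> real) \<Rightarrow> (nat \<Rightarrow> real) \<Rightarrow> real" where
    "k v r z = (if v = s then (if xr (r t1 \<in> B1 t1) (r t2 \<in> B1 t2) then indicator (B1 s) z else indicator (B0 s) z)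
           else if v = t1 \<or> v = t2 then indicator (B0 v \<union> B1 v) z / 2
           else indicator (B0 v) z)" for v r z
  have kc: "kcond M Eg k" if tE: "t1 \<in> pa Eg s" "t2 \<in> pa Eg s" for Eg
    unfolding kcond_def
  proof (intro allI conjI ballI)
    fix v
    show "(\<lambda>(y, z). k v y z) \<in> borel_measurable (PiM (pa Eg v) M \<Otimes>\<^sub>M M v)"
    proof (cases "v = s")
      case True
      have [measurable]: "(\<lambda>x. x t1) \<in> measurable (PiM (pa Eg s) M) (M t1)" "(\<lambda>x. x t2) \<in> measurable (PiM (pa Eg s) M) (M t2)"
        using tE by (auto intro!: measurable_component_singleton)
      have "(\<lambda>(y, z). k v y z) = (\<lambda>(y, z). if xr (y t1 \<in> B1 t1) (y t2 \<in> B1 t2) then indicator (B1 s) z else indicator (B0 s) z)"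
        using True by (auto simp: k_def fun_eq_iff)
      also have "\<dots> \<in> borel_measurable (PiM (pa Eg s) M \<Otimes>\<^sub>M M s)" by measurable
      finally show ?thesis using True by simp
    next
      case False
      show ?thesis
      proof (cases "v = t1 \<or> v = t2")
        case True
        have "(\<lambda>(y, z). k v y z) = (\<lambda>(y, z). indicator (B0 v \<union> B1 v) z / 2)"
          using True False by (auto simp: k_def fun_eq_iff)
        also have "\<dots> \<in> borel_measurable (PiM (pa Eg v) M \<Otimes>\<^sub>M M v)" by measurable
        finally show ?thesis .
      next
        case False2: False
        have "(\<lambda>(y, z). k v y z) = (\<lambda>(y, z). indicator (B0 v) z)"
          using False2 False by (auto simp: k_def fun_eq_iff)
        also have "\<dots> \<in> borel_measurable (PiM (pa Eg v) M \<Otimes>\<^sub>M M v)" by measurable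
        finally show ?thesis .
      qed
    qed
  next
    fix v y z show "0 \<le> k v y z" unfolding k_def by (simp split: if_split)
  next
    fix v y
    show "(\<integral>\<^sup>+ z. ennreal (k v y z) \<partial>M v) = 1"
    proof (cases "v = s")
      case True
      show ?thesis
      proof (cases "xr (y t1 \<in> B1 t1) (y t2 \<in> B1 t2)")
        case c: False
        have "(\<integral>\<^sup>+ z. ennreal (k v y z) \<partial>M v) = (\<integral>\<^sup>+ z. indicator (B0 s) z \<partial>M s)"
          using True c unfolding k_def by (simp add: ennreal_indicator)
        then show ?thesis using B0m by simp
      next
        case c: True
        have "(\<integral>\<^sup>+ z. ennreal (k v y z) \<partial>M v) = (\<integral>\<^sup>+ z. indicator (B1 s) z \<partial>M s)"
          using True c unfolding k_def by (simp add: ennreal_indicator)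
        then show ?thesis using B1m by simp
      qed

    next
      case False
      show ?thesis
      proof (cases "v = t1 \<or> v = t2")
        case True
        have "(\<integral>\<^sup>+ z. ennreal (k v y z) \<partial>M v) = (\<integral>\<^sup>+ z. indicator (B0 v \<union> B1 v) z / 2 \<partial>M v)"
          using False True unfolding k_def by (intro nn_integral_cong) (auto simp: indicator_def divide_ennreal_def)
        also have "\<dots> = emeasure (M v) (B0 v \<union> B1 v) / 2"
          by (subst nn_integral_divide) auto
        also have "emeasure (M v) (B0 v \<union> B1 v) = 2"
          using plus_emeasure[OF B0s B1s Bdis, of v] B0m B1m by (simp add: one_add_one)
        finally show ?thesis by simp
      next
        case False2: False
        then show ?thesis using False unfolding k_def using B0m by (auto simp: ennreal_indicator)
      qed
    qed
  qed
  define E0 where "E0 = {(t1, s), (t2, s)}"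
  have paE0: "pa E0 v = (if v = s then {t1, t2} else {})" for v
    using st1 st2 by (auto simp: pa_def E0_def)
  have acE0: "acyclic E0"
    by (rule acyclic_subset[OF acE]) (use t1s t2s in \<open>auto simp: E0_def pa_def\<close>)
  have kcE: "kcond M E k" by (rule kc[OF t1s t2s])
  have kcE0: "kcond M E0 k" by (rule kc) (auto simp: paE0)
  have KKeq: "KK E k v m = KK E0 k v m" for v m
    using t1s t2s by (auto simp: KK_def k_def paE0)
  have ne: "space (PiM UNIV M) \<noteq> {}"
  proof -
    have "space (M v) \<noteq> {}" for v
    proof
      assume "space (M v) = {}"
      then have "B0 v = {}" using sets.sets_into_space[OF B0s[of v]] by auto
      then show False using B0m[of v] by simp
    qed
    then show ?thesis by (simp add: space_PiM_empty_iff)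
  qed
  obtain x0 where x0: "x0 \<in> space (PiM UNIV M)" using ne by blast
  define F where "F x = (\<Prod>v\<in>UNIV. KK E k v x)" for x
  have Fm: "F \<in> borel_measurable (PiM UNIV M)"
    unfolding F_def by (intro borel_measurable_prod_ennreal KK_meas[OF kcE]) auto
  define P where "P = density (PiM UNIV M) F"
  have "(\<integral>\<^sup>+ y. (\<Prod>v\<in>UNIV. KK E k v (ov UNIV x0 y)) \<partial>PiM UNIV M) = 1"
    by (rule sink_lemma[OF sf kcE acE x0])
  then have intF: "(\<integral>\<^sup>+ y. F y \<partial>PiM UNIV M) = 1" by (simp add: ov_def F_def)
  have probP: "prob_space P"
  proof (rule prob_spaceI)
    have "emeasure P (space P) = (\<integral>\<^sup>+ y. F y * indicator (space (PiM UNIV M)) y \<partial>PiM UNIV M)"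
      unfolding P_def by (subst emeasure_density) (auto simp: Fm)
    also have "\<dots> = (\<integral>\<^sup>+ y. F y \<partial>PiM UNIV M)" by (rule nn_integral_cong) auto
    finally show "emeasure P (space P) = 1" using intF by simp
  qed
  have "P \<in> dag_model M E"
    unfolding dag_model_def
  proof (intro CollectI conjI probP exI[of _ k])
    show "\<forall>s. (\<lambda>(y, z). k s y z) \<in> borel_measurable (PiM (pa E s) M \<Otimes>\<^sub>M M s)
           \<and> (\<forall>y \<in> space (PiM (pa E s) M). \<forall>z \<in> space (M s). 0 \<le> k s y z)
           \<and> (\<forall>y \<in> space (PiM (pa E s) M). (\<integral>\<^sup>+ z. ennreal (k s y z) \<partial>M s) = 1)"
      using kcE unfolding kcond_def by blast
    show "P = density (PiM UNIV M) (\<lambda>x. \<Prod>s\<in>UNIV. ennreal (k s (restrict x (pa E s)) (x s)))"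
      unfolding P_def F_def KK_def ..
  qed
  with sub have "P \<in> dag_model M E'" by blast
  then obtain k' where kc'0: "\<forall>s. (\<lambda>(y, z). k' s y z) \<in> borel_measurable (PiM (pa E' s) M \<Otimes>\<^sub>M M s)
           \<and> (\<forall>y \<in> space (PiM (pa E' s) M). \<forall>z \<in> space (M s). 0 \<le> k' s y z)
           \<and> (\<forall>y \<in> space (PiM (pa E' s) M). (\<integral>\<^sup>+ z. ennreal (k' s y z) \<partial>M s) = 1)"
      and P'0: "P = density (PiM UNIV M) (\<lambda>x. \<Prod>s\<in>UNIV. ennreal (k' s (restrict x (pa E' s)) (x s)))"
    unfolding dag_model_def by (auto simp only: mem_Collect_eq)
  have kc': "kcond M E' k'" using kc'0 unfolding kcond_def .
  have P': "P = density (PiM UNIV M) (\<lambda>x. \<Prod>v\<in>UNIV. KK E' k' v x)" using P'0 unfolding KK_def .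
  define F' where "F' x = (\<Prod>v\<in>UNIV. KK E' k' v x)" for x
  have F'm: "F' \<in> borel_measurable (PiM UNIV M)"
    unfolding F'_def by (intro borel_measurable_prod_ennreal KK_meas[OF kc']) auto
  have FF': "(\<integral>\<^sup>+ x. F x * G x \<partial>PiM UNIV M) = (\<integral>\<^sup>+ x. F' x * G x \<partial>PiM UNIV M)"
    if "G \<in> borel_measurable (PiM UNIV M)" for G
  proof -
    have "(\<integral>\<^sup>+ x. F x * G x \<partial>PiM UNIV M) = (\<integral>\<^sup>+ x. G x \<partial>P)"
      unfolding P_def by (rule nn_integral_density[symmetric, OF Fm that])
    also have "\<dots> = (\<integral>\<^sup>+ x. F' x * G x \<partial>PiM UNIV M)"
      unfolding P' F'_def[symmetric] by (rule nn_integral_density[OF F'm that])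
    finally show ?thesis .
  qed
  define A where "A = {v. (v, t1) \<in> E'\<^sup>* \<or> (v, t2) \<in> E'\<^sup>*}"
  define Z where "Z = A - {t1, t2}"
  have ancA: "pa E' v \<subseteq> A" if "v \<in> A" for v
  proof
    fix u assume "u \<in> pa E' v" then have e: "(u, v) \<in> E'" by (simp add: pa_def)
    from that show "u \<in> A" unfolding A_def using converse_rtrancl_into_rtrancl[OF e] by blast
  qed
  have t1A: "t1 \<in> A" and t2A: "t2 \<in> A" unfolding A_def by auto
  have ancA0: "pa E0 v \<subseteq> A" if "v \<in> A" for v
    using t1A t2A by (auto simp: paE0)
  have "(s, t1) \<in> E'" using conv t1s by (auto simp: pa_def)
  then have sA: "s \<in> A" unfolding A_def by auto
  have sZ: "s \<in> Z" using sA st1 st2 by (auto simp: Z_def)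
  have AZ: "A = Z \<union> {t1, t2}" and t1Z: "t1 \<notin> Z" and t2Z: "t2 \<notin> Z" and ZT: "Z \<inter> {t1, t2} = {}"
    using t1A t2A by (auto simp: Z_def)
  have key: "\<not> (t1 \<in> insert v (pa E' v) \<and> t2 \<in> insert v (pa E' v))" if vA: "v \<in> A" for v
  proof
    assume h: "t1 \<in> insert v (pa E' v) \<and> t2 \<in> insert v (pa E' v)"
    show False
    proof (cases "v = t1 \<or> v = t2")
      case True then show False using h n12 n21 t12 by (auto simp: pa_def)
    next
      case False
      then have e1: "(t1, v) \<in> E'" and e2: "(t2, v) \<in> E'" using h by (auto simp: pa_def)
      from vA consider "(v, t1) \<in> E'\<^sup>*" | "(v, t2) \<in> E'\<^sup>*" unfolding A_def by blast
      then show False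
      proof cases
        case 1 then have "(t1, t1) \<in> E'\<^sup>+" by (rule rtrancl_into_trancl2[OF e1])
        then show False using acE' unfolding acyclic_def by blast
      next
        case 2 then have "(t2, t2) \<in> E'\<^sup>+" by (rule rtrancl_into_trancl2[OF e2])
        then show False using acE' unfolding acyclic_def by blast
      qed
    qed
  qed
  have finZ: "finite Z" by simp
  define W where "W = PiE Z B0"
  define Bs where "Bs a v = (if a then B1 v else B0 v)" for a v
  have Bss[measurable]: "Bs a v \<in> sets (M v)" and Bsm: "emeasure (M v) (Bs a v) = 1" for a v
    by (auto simp: Bs_def B0m B1m)
  interpret Zf: finite_product_sigma_finite M Z by unfold_locales simp
  have Wm[measurable]: "W \<in> sets (PiM Z M)" unfolding W_def by (intro sets_PiM_I_finite) auto
  have WN: "emeasure (PiM Z M) W = 1" unfolding W_def by (subst Zf.measure_times) (auto simp: B0m)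
  define A1 where "A1 = {v \<in> A. t2 \<notin> insert v (pa E' v)}"
  define A2 where "A2 = {v \<in> A. t2 \<in> insert v (pa E' v)}"
  have A12: "A = A1 \<union> A2" "A1 \<inter> A2 = {}" by (auto simp: A1_def A2_def)
  have A1sub: "insert v (pa E' v) \<subseteq> insert t1 Z" if "v \<in> A1" for v
    using that ancA unfolding A1_def Z_def by auto
  have A2sub: "insert v (pa E' v) \<subseteq> insert t2 Z" if "v \<in> A2" for v
    using that ancA key unfolding A2_def Z_def by blast
  define \<phi> where "\<phi> m = (\<Prod>v\<in>A1. KK E' k' v m)" for m
  define \<psi> where "\<psi> m = (\<Prod>v\<in>A2. KK E' k' v m)" for m
  have \<phi>m[measurable]: "\<phi> \<in> borel_measurable (PiM (insert t1 Z) M)"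
    unfolding \<phi>_def by (intro borel_measurable_prod_ennreal KK_meas[OF kc']) (use A1sub in auto)
  have \<psi>m[measurable]: "\<psi> \<in> borel_measurable (PiM (insert t2 Z) M)"
    unfolding \<psi>_def by (intro borel_measurable_prod_ennreal KK_meas[OF kc']) (use A2sub in auto)
  define \<Phi> where "\<Phi> a z = (\<integral>\<^sup>+ x1. indicator (Bs a t1) x1 * \<phi> (z(t1 := x1)) \<partial>M t1)" for a z
  define \<Psi> where "\<Psi> b z = (\<integral>\<^sup>+ x2. indicator (Bs b t2) x2 * \<psi> (z(t2 := x2)) \<partial>M t2)" for b z
  have \<Phi>m: "\<Phi> a \<in> borel_measurable (PiM Z M)" for a
  proof -
    have "(\<lambda>(z, x1). indicator (Bs a t1) x1 * \<phi> (z(t1 := x1))) \<in> borel_measurable (PiM Z M \<Otimes>\<^sub>M M t1)"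
      by measurable
    from sigma_finite_measure.borel_measurable_nn_integral_fst[OF sf this] show ?thesis unfolding \<Phi>_def by simp
  qed
  have \<Psi>m: "\<Psi> b \<in> borel_measurable (PiM Z M)" for b
  proof -
    have "(\<lambda>(z, x2). indicator (Bs b t2) x2 * \<psi> (z(t2 := x2))) \<in> borel_measurable (PiM Z M \<Otimes>\<^sub>M M t2)"
      by measurable
    from sigma_finite_measure.borel_measurable_nn_integral_fst[OF sf this] show ?thesis unfolding \<Psi>_def by simp
  qed
  define c :: ennreal where "c = ennreal (1/2) * ennreal (1/2)"
  have c0: "c \<noteq> 0" by (simp add: c_def)
  have meq: "(\<integral>\<^sup>+ z. indicator (S \<inter> W) z * (\<Phi> a z * \<Psi> b z) \<partial>PiM Z M) = (if a = b then c else 0) * emeasure (PiM Z M) (S \<inter> W)"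
    if Sm: "S \<in> sets (PiM Z M)" for S a b
  proof -
    have SWm[measurable]: "S \<inter> W \<in> sets (PiM Z M)" using Sm Wm by auto
    define T where "T = {t1, t2}"
    have AZT: "A = Z \<union> T" and ZT': "Z \<inter> T = {}" using AZ ZT by (auto simp: T_def)
    define G where "G u = indicator (S \<inter> W) (restrict u Z) * indicator (Bs a t1) (u t1) * (indicator (Bs b t2) (u t2) :: ennreal)"
      for u :: "'n \<Rightarrow> nat \<Rightarrow> real"
    have Gm: "G \<in> borel_measurable (PiM I M)" if I: "Z \<subseteq> I" "t1 \<in> I" "t2 \<in> I" for I
    proof -
      have [measurable]: "(\<lambda>u. restrict u Z) \<in> measurable (PiM I M) (PiM Z M)"
        using I(1) by (rule measurable_restrict_subset)
      have [measurable]: "(\<lambda>u. u t1) \<in> measurable (PiM I M) (M t1)" "(\<lambda>u. u t2) \<in> measurable (PiM I M) (M t2)"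
        using I by (auto intro!: measurable_component_singleton)
      show ?thesis unfolding G_def by measurable
    qed
    have GmA: "G \<in> borel_measurable (PiM A M)" by (rule Gm) (use AZ in auto)
    have GA: "G (restrict x A) = G x" for x
    proof -
      have "restrict (restrict x A) Z = restrict x Z" using AZ by (auto simp: Int_absorb1)
      then show ?thesis unfolding G_def using t1A t2A by simp
    qed
    have Gmerge: "G (merge Z T (z, p)) = indicator (S \<inter> W) z * indicator (Bs a t1) (p t1) * indicator (Bs b t2) (p t2)"
      if z: "z \<in> space (PiM Z M)" for z p
    proof -
      have "restrict (merge Z T (z, p)) Z = z"
        using z ZT' by (simp add: space_PiM PiE_def extensional_restrict)
      moreover have "merge Z T (z, p) t1 = p t1" "merge Z T (z, p) t2 = p t2"
        using t1Z t2Z by (auto simp: merge_def T_def)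
      ultimately show ?thesis unfolding G_def by simp
    qed
    have foldA: "(\<integral>\<^sup>+ u. Q u * G u \<partial>PiM A M) =
      (\<integral>\<^sup>+ z. (\<integral>\<^sup>+ p. Q (merge Z T (z, p)) * (indicator (S \<inter> W) z * indicator (Bs a t1) (p t1) * indicator (Bs b t2) (p t2)) \<partial>PiM T M) \<partial>PiM Z M)"
      if Qm: "Q \<in> borel_measurable (PiM A M)" for Q
    proof -
      have m: "(\<lambda>u. Q u * G u) \<in> borel_measurable (PiM (Z \<union> T) M)"
        using Qm GmA unfolding AZT by measurable
      have "(\<integral>\<^sup>+ u. Q u * G u \<partial>PiM A M) = (\<integral>\<^sup>+ z. (\<integral>\<^sup>+ p. Q (merge Z T (z, p)) * G (merge Z T (z, p)) \<partial>PiM T M) \<partial>PiM Z M)"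
        unfolding AZT by (rule product_nn_integral_fold[OF ZT' finite finite m])
      also have "\<dots> = (\<integral>\<^sup>+ z. (\<integral>\<^sup>+ p. Q (merge Z T (z, p)) * (indicator (S \<inter> W) z * indicator (Bs a t1) (p t1) * indicator (Bs b t2) (p t2)) \<partial>PiM T M) \<partial>PiM Z M)"
        by (intro nn_integral_cong) (simp add: Gmerge)
      finally show ?thesis .
    qed
    have FGeq: "(\<integral>\<^sup>+ x. F x * G x \<partial>PiM UNIV M) = (\<integral>\<^sup>+ x. F' x * G x \<partial>PiM UNIV M)"
      by (rule FF') (rule Gm, auto)
    have L1: "(\<integral>\<^sup>+ x. F x * G x \<partial>PiM UNIV M) = (\<integral>\<^sup>+ u. (\<Prod>v\<in>A. KK E0 k v u) * G u \<partial>PiM A M)"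
    proof -
      have "(\<integral>\<^sup>+ x. F x * G x \<partial>PiM UNIV M) = (\<integral>\<^sup>+ x. (\<Prod>v\<in>UNIV. KK E0 k v x) * G (restrict x A) \<partial>PiM UNIV M)"
        by (simp add: F_def KKeq GA)
      also have "\<dots> = (\<integral>\<^sup>+ u. (\<Prod>v\<in>A. KK E0 k v u) * G u \<partial>PiM A M)"
        by (rule split_lemma[OF sf kcE0 acE0 ancA0 GmA ne])
      finally show ?thesis .
    qed
    have R1: "(\<integral>\<^sup>+ x. F' x * G x \<partial>PiM UNIV M) = (\<integral>\<^sup>+ u. (\<Prod>v\<in>A. KK E' k' v u) * G u \<partial>PiM A M)"
    proof -
      have "(\<integral>\<^sup>+ x. F' x * G x \<partial>PiM UNIV M) = (\<integral>\<^sup>+ x. (\<Prod>v\<in>UNIV. KK E' k' v x) * G (restrict x A) \<partial>PiM UNIV M)"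
        by (simp add: F'_def GA)
      also have "\<dots> = (\<integral>\<^sup>+ u. (\<Prod>v\<in>A. KK E' k' v u) * G u \<partial>PiM A M)"
        by (rule split_lemma[OF sf kc' acE' ancA GmA ne])
      finally show ?thesis .
    qed
    have Q0m: "(\<lambda>u. \<Prod>v\<in>A. KK E0 k v u) \<in> borel_measurable (PiM A M)"
      by (intro borel_measurable_prod_ennreal KK_meas[OF kcE0]) (use ancA0 in auto)
    have Q'm: "(\<lambda>u. \<Prod>v\<in>A. KK E' k' v u) \<in> borel_measurable (PiM A M)"
      by (intro borel_measurable_prod_ennreal KK_meas[OF kc']) (use ancA in auto)
    have pint: "(\<integral>\<^sup>+ p. f1 (p t1) * f2 (p t2) \<partial>PiM T M) = integral\<^sup>N (M t1) f1 * integral\<^sup>N (M t2) f2"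
      if "f1 \<in> borel_measurable (M t1)" "f2 \<in> borel_measurable (M t2)" for f1 f2
      unfolding T_def by (rule pair_integral[OF sf t12 that])
    have in0: "(\<integral>\<^sup>+ p. (\<Prod>v\<in>A. KK E0 k v (merge Z T (z, p))) * (indicator (S \<inter> W) z * indicator (Bs a t1) (p t1) * indicator (Bs b t2) (p t2)) \<partial>PiM T M)
       = (if a = b then c else 0) * indicator (S \<inter> W) z" if z: "z \<in> space (PiM Z M)" for z
    proof -
      have pw: "(\<Prod>v\<in>A. KK E0 k v (merge Z T (z, p))) * (indicator (S \<inter> W) z * indicator (Bs a t1) (p t1) * indicator (Bs b t2) (p t2))
        = ((if a = b then c else 0) * indicator (S \<inter> W) z) * (indicator (Bs a t1) (p t1) * indicator (Bs b t2) (p t2))" for p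
      proof (cases "z \<in> S \<inter> W \<and> p t1 \<in> Bs a t1 \<and> p t2 \<in> Bs b t2")
        case False then show ?thesis by (auto simp: indicator_def)
      next
        case True
        define m where "m = merge Z T (z, p)"
        have mt1: "m t1 = p t1" "m t2 = p t2" using t1Z t2Z by (auto simp: m_def merge_def T_def)
        have mZ: "m i = z i" if "i \<in> Z" for i using that by (auto simp: m_def merge_def)
        have zB0: "z i \<in> B0 i" if "i \<in> Z" for i using True that by (auto simp: W_def PiE_iff)
        have b1: "(p t1 \<in> B1 t1) = a" using True Bdis[of t1] by (cases a) (auto simp: Bs_def)
        have b2: "(p t2 \<in> B1 t2) = b" using True Bdis[of t2] by (cases b) (auto simp: Bs_def)
        have pB1: "p t1 \<in> B0 t1 \<union> B1 t1" using True by (cases a) (auto simp: Bs_def)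
        have pB2: "p t2 \<in> B0 t2 \<union> B1 t2" using True by (cases b) (auto simp: Bs_def)
        define X :: ennreal where "X = (if a = b then 1 else 0)"
        define h :: ennreal where "h = ennreal (1/2)"
        have KKv: "KK E0 k v m = (if v = s then X else 1) * (if v = t1 then h else 1) * (if v = t2 then h else 1)"
          if vA: "v \<in> A" for v
        proof -
          consider "v = s" | "v = t1" | "v = t2" | "v \<in> Z" "v \<noteq> s" using vA AZ by auto
          then show ?thesis
          proof cases
            case 1
            have "z s \<notin> B1 s" using zB0[OF sZ] Bdis[of s] by blast
            have "KK E0 k v m = ennreal (if xr (m t1 \<in> B1 t1) (m t2 \<in> B1 t2) then indicator (B1 s) (m s) else indicator (B0 s) (m s))"
              using 1 by (simp add: KK_def k_def paE0)
            also have "\<dots> = X"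
              using mt1 b1 b2 zB0[OF sZ] mZ[OF sZ] \<open>z s \<notin> B1 s\<close> by (auto simp: xr_def X_def indicator_def)
            finally show ?thesis using 1 st1 st2 by simp
          next
            case 2
            have "KK E0 k v m = ennreal (indicator (B0 t1 \<union> B1 t1) (m t1) / 2)"
              using 2 st1 by (simp add: KK_def k_def)
            also have "\<dots> = h" using mt1 pB1 by (simp add: h_def)
            finally show ?thesis using 2 st1 t12 by simp
          next
            case 3
            have "KK E0 k v m = ennreal (indicator (B0 t2 \<union> B1 t2) (m t2) / 2)"
              using 3 st2 by (simp add: KK_def k_def)
            also have "\<dots> = h" using mt1 pB2 by (simp add: h_def)
            finally show ?thesis using 3 st2 t12 by simp
          next
            case 4
            have "v \<noteq> t1" "v \<noteq> t2" using 4 t1Z t2Z by auto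
            then have "KK E0 k v m = ennreal (indicator (B0 v) (m v))"
              using 4 by (simp add: KK_def k_def)
            also have "\<dots> = 1" using mZ[OF 4(1)] zB0[OF 4(1)] by simp
            finally show ?thesis using 4 \<open>v \<noteq> t1\<close> \<open>v \<noteq> t2\<close> by simp
          qed
        qed
        have "(\<Prod>v\<in>A. KK E0 k v m) = (\<Prod>v\<in>A. (if v = s then X else 1) * (if v = t1 then h else 1) * (if v = t2 then h else 1))"
          by (rule prod.cong[OF refl KKv])
        also have "\<dots> = X * h * h" by (simp add: prod.distrib sA t1A t2A)
        finally have "(\<Prod>v\<in>A. KK E0 k v m) = X * h * h" .
        then show ?thesis using True by (simp add: m_def[symmetric] X_def h_def c_def)
      qed
      have "(\<integral>\<^sup>+ p. (\<Prod>v\<in>A. KK E0 k v (merge Z T (z, p))) * (indicator (S \<inter> W) z * indicator (Bs a t1) (p t1) * indicator (Bs b t2) (p t2)) \<partial>PiM T M)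
        = ((if a = b then c else 0) * indicator (S \<inter> W) z) * (\<integral>\<^sup>+ p. indicator (Bs a t1) (p t1) * indicator (Bs b t2) (p t2) \<partial>PiM T M)"
        unfolding pw by (rule nn_integral_cmult) (unfold T_def, measurable)
      also have "(\<integral>\<^sup>+ p. indicator (Bs a t1) (p t1) * indicator (Bs b t2) (p t2) \<partial>PiM T M) = 1"
        by (subst pint) (auto simp: Bsm)
      finally show ?thesis by simp
    qed
    have in1: "(\<integral>\<^sup>+ p. (\<Prod>v\<in>A. KK E' k' v (merge Z T (z, p))) * (indicator (S \<inter> W) z * indicator (Bs a t1) (p t1) * indicator (Bs b t2) (p t2)) \<partial>PiM T M)
       = indicator (S \<inter> W) z * (\<Phi> a z * \<Psi> b z)" if z: "z \<in> space (PiM Z M)" for z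
    proof -
      have pw: "(\<Prod>v\<in>A. KK E' k' v (merge Z T (z, p))) * (indicator (S \<inter> W) z * indicator (Bs a t1) (p t1) * indicator (Bs b t2) (p t2))
        = indicator (S \<inter> W) z * ((indicator (Bs a t1) (p t1) * \<phi> (z(t1 := p t1))) * (indicator (Bs b t2) (p t2) * \<psi> (z(t2 := p t2))))" for p
      proof -
        define m where "m = merge Z T (z, p)"
        have "(\<Prod>v\<in>A. KK E' k' v m) = (\<Prod>v\<in>A1. KK E' k' v m) * (\<Prod>v\<in>A2. KK E' k' v m)"
          unfolding A12(1) by (rule prod.union_disjoint[OF finite finite A12(2)])
        also have "(\<Prod>v\<in>A1. KK E' k' v m) = \<phi> (z(t1 := p t1))"
          unfolding \<phi>_def
        proof (rule prod.cong[OF refl KK_agree])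
          fix v i assume "v \<in> A1" "i \<in> insert v (pa E' v)"
          then have "i \<in> insert t1 Z" using A1sub by blast
          then show "m i = (z(t1 := p t1)) i" using t1Z by (auto simp: m_def merge_def T_def)
        qed
        also have "(\<Prod>v\<in>A2. KK E' k' v m) = \<psi> (z(t2 := p t2))"
          unfolding \<psi>_def
        proof (rule prod.cong[OF refl KK_agree])
          fix v i assume "v \<in> A2" "i \<in> insert v (pa E' v)"
          then have "i \<in> insert t2 Z" using A2sub by blast
          then show "m i = (z(t2 := p t2)) i" using t2Z by (auto simp: m_def merge_def T_def)
        qed
        finally have eq: "(\<Prod>v\<in>A. KK E' k' v (merge Z T (z, p))) = \<phi> (z(t1 := p t1)) * \<psi> (z(t2 := p t2))"
          unfolding m_def .
        show ?thesis unfolding eq by (simp only: ac_simps)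
      qed
      have f1m: "(\<lambda>x1. indicator (Bs a t1) x1 * \<phi> (z(t1 := x1))) \<in> borel_measurable (M t1)"
        using measurable_compose[OF measurable_component_update[OF z t1Z] \<phi>m] by measurable
      have f2m: "(\<lambda>x2. indicator (Bs b t2) x2 * \<psi> (z(t2 := x2))) \<in> borel_measurable (M t2)"
        using measurable_compose[OF measurable_component_update[OF z t2Z] \<psi>m] by measurable
      have "(\<integral>\<^sup>+ p. (\<Prod>v\<in>A. KK E' k' v (merge Z T (z, p))) * (indicator (S \<inter> W) z * indicator (Bs a t1) (p t1) * indicator (Bs b t2) (p t2)) \<partial>PiM T M)
        = indicator (S \<inter> W) z * (\<integral>\<^sup>+ p. (indicator (Bs a t1) (p t1) * \<phi> (z(t1 := p t1))) * (indicator (Bs b t2) (p t2) * \<psi> (z(t2 := p t2))) \<partial>PiM T M)"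
        unfolding pw
      proof (rule nn_integral_cmult)
        have p1: "(\<lambda>p. p t1) \<in> measurable (PiM T M) (M t1)" and p2: "(\<lambda>p. p t2) \<in> measurable (PiM T M) (M t2)"
          by (auto simp: T_def)
        show "(\<lambda>p. (indicator (Bs a t1) (p t1) * \<phi> (z(t1 := p t1))) * (indicator (Bs b t2) (p t2) * \<psi> (z(t2 := p t2)))) \<in> borel_measurable (PiM T M)"
          by (rule borel_measurable_times_ennreal[OF measurable_compose[OF p1 f1m] measurable_compose[OF p2 f2m]])
      qed
      also have "\<dots> = indicator (S \<inter> W) z * (\<Phi> a z * \<Psi> b z)"
        by (subst pint[OF f1m f2m]) (simp add: \<Phi>_def \<Psi>_def)
      finally show ?thesis .
    qed
    have "(\<integral>\<^sup>+ z. indicator (S \<inter> W) z * (\<Phi> a z * \<Psi> b z) \<partial>PiM Z M)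
      = (\<integral>\<^sup>+ z. (\<integral>\<^sup>+ p. (\<Prod>v\<in>A. KK E' k' v (merge Z T (z, p))) * (indicator (S \<inter> W) z * indicator (Bs a t1) (p t1) * indicator (Bs b t2) (p t2)) \<partial>PiM T M) \<partial>PiM Z M)"
      by (rule nn_integral_cong) (simp add: in1)
    also have "\<dots> = (\<integral>\<^sup>+ u. (\<Prod>v\<in>A. KK E' k' v u) * G u \<partial>PiM A M)"
      by (rule foldA[OF Q'm, symmetric])
    also have "\<dots> = (\<integral>\<^sup>+ x. F x * G x \<partial>PiM UNIV M)" using R1 FGeq by simp
    also have "\<dots> = (\<integral>\<^sup>+ u. (\<Prod>v\<in>A. KK E0 k v u) * G u \<partial>PiM A M)" by (rule L1)
    also have "\<dots> = (\<integral>\<^sup>+ z. (\<integral>\<^sup>+ p. (\<Prod>v\<in>A. KK E0 k v (merge Z T (z, p))) * (indicator (S \<inter> W) z * indicator (Bs a t1) (p t1) * indicator (Bs b t2) (p t2)) \<partial>PiM T M) \<partial>PiM Z M)"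
      by (rule foldA[OF Q0m])
    also have "\<dots> = (\<integral>\<^sup>+ z. (if a = b then c else 0) * indicator (S \<inter> W) z \<partial>PiM Z M)"
      by (rule nn_integral_cong) (simp add: in0)
    also have "\<dots> = (if a = b then c else 0) * emeasure (PiM Z M) (S \<inter> W)"
      by (rule nn_integral_cmult_indicator[OF SWm])
    finally show ?thesis .
  qed
  show False
    by (rule final_contra[OF Wm _ \<Phi>m \<Psi>m c0 meq]) (use WN in auto)
qed

theorem proposition2:
  fixes E E' :: "('n::finite \<times> 'n) set"
    and M :: "'n \<Rightarrow> (nat \<Rightarrow> real) measure"
  assumes "state_spaces M"
    and "acyclic E" and "acyclic E'"
    and "dag_model M E \<subseteq> dag_model M E'"
    and "E\<inverse> \<subseteq> E'"
  shows "moral E \<subseteq> undirected E'"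
proof (rule subsetI)
  fix p assume p: "p \<in> moral E"
  obtain a b where pab: "p = (a, b)" by (cases p)
  show "p \<in> undirected E'"
  proof (rule ccontr)
    assume np: "p \<notin> undirected E'"
    have nab: "(a, b) \<notin> E'" "(b, a) \<notin> E'" using np pab by (auto simp: undirected_def)
    then have "(a, b) \<notin> E" "(b, a) \<notin> E" using assms(5) by auto
    with p pab nab obtain s where "a \<in> pa E s" "b \<in> pa E s" "a \<noteq> b" unfolding moral_def by auto
    then show False using main_contra[OF assms(1-5)] nab by blast
  qed
qed

end
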